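(* Let $\varepsilon(n,k)=e(n,k)+q\,o(n,k)$ and $\lambda(n,k)=L(n,k)+q\bar L(n,k)$ in $\mathbb{Z}[q]$. Then $\varepsilon(n,0)=\lambda(n,0)=1$ for all $n\ge0$, $\varepsilon(0,k)=\lambda(0,k)=0$ for $k>0$, and for all $n\ge1$, $k\ge1$, modulo $q^2-1$, $$\varepsilon(n,k)\equiv q^k\big(\varepsilon(n-1,k)+\varepsilon(n-1,k-1)\big),\qquad \lambda(n,k)\equiv q^k\lambda(n-1,k)+\lambda(n-1,k-1).$$
   Context: $e(n,k)$ (resp. $o(n,k)$) is the number of $k$-element subsets of $\{1,\dots,n\}$ with even (resp. odd) sum, the empty set counting as even. Losanitsch's triangle $(L(n,k))$ is defined by $L(0,k)=[k=0]$, $L(1,k)=[k\le 1]$ for $k\ge0$, $L(n,k)=0$ for $k<0$, and for $n\ge 2$: $L(n,k)=L(n-2,k)+\binom{n-2}{k-1}+L(n-2,k-2)$ (with $\binom{m}{j}=0$ for $j<0$ or $j>m$); $\bar L(n,k)=\binom nk-L(n,k)$. *)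

theory Defs
  imports "HOL-Computational_Algebra.Polynomial"
begin

definition e_cnt :: "nat \<Rightarrow> nat \<Rightarrow> nat" where
  "e_cnt n k = card {S. S \<subseteq> {1..n} \<and> card S = k \<and> even (\<Sum>S)}"

definition o_cnt :: "nat \<Rightarrow> nat \<Rightarrow> nat" where
  "o_cnt n k = card {S. S \<subseteq> {1..n} \<and> card S = k \<and> odd (\<Sum>S)}"

text \<open>Losanitsch's triangle; terms with negative second index are 0.\<close>
fun los :: "nat \<Rightarrow> nat \<Rightarrow> nat" where
  "los 0 k = (if k = 0 then 1 else 0)"
| "los (Suc 0) k = (if k \<le> 1 then 1 else 0)"
| "los (Suc (Suc n)) k =
     los n k + (if k \<ge> 1 then n choose (k - 1) else 0) + (if k \<ge> 2 then los n (k - 2) else 0)"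

definition los_bar :: "nat \<Rightarrow> nat \<Rightarrow> int" where
  "los_bar n k = int (n choose k) - int (los n k)"

definition eps :: "nat \<Rightarrow> nat \<Rightarrow> int poly" where
  "eps n k = of_nat (e_cnt n k) + [:0, 1:] * of_nat (o_cnt n k)"

definition lam :: "nat \<Rightarrow> nat \<Rightarrow> int poly" where
  "lam n k = of_nat (los n k) + [:0, 1:] * of_int (los_bar n k)"

end

theory Submission
  imports Defs
begin

lemma los_0': "k = 0 \<Longrightarrow> los n k = 1"
  by (induction n k rule: los.induct) auto
lemma los_0: "los n 0 = 1" by (simp add: los_0')

lemma los_Q: "int (los (Suc n) (Suc k)) = int (los n k) +
   (if even (Suc k) then int (los n (Suc k)) else int (n choose Suc k) - int (los n (Suc k)))"
proof (induction n arbitrary: k rule: less_induct)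
  case (less n)
  show ?case
  proof (cases n)
    case 0 then show ?thesis by auto
  next
    case (Suc n1)
    show ?thesis
    proof (cases n1)
      case 0 then show ?thesis using Suc by (cases k) auto
    next
      case (Suc m)
      have n: "n = Suc (Suc m)" using Suc \<open>n = Suc n1\<close> by simp
      have IH: "\<And>j. int (los (Suc m) (Suc j)) = int (los m j) +
   (if even (Suc j) then int (los m (Suc j)) else int (m choose Suc j) - int (los m (Suc j)))"
        using less n by auto
      show ?thesis
      proof (cases k)
        case 0
        have "int (los (Suc m) (Suc 0)) = 1 + int m - int (los m 1)" using IH[of 0] by (simp add: los_0)
        then show ?thesis using 0 n by (simp add: los_0)
      next
        case (Suc k1)
        show ?thesis
        proof (cases k1)
          case 0
          have "int (los (Suc m) 2) = int (los m 1) + int (los m 2)" using IH[of 1] by (simp add: numeral_2_eq_2)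
          then show ?thesis using 0 Suc n by (simp add: numeral_2_eq_2 los_0)
        next
          case (Suc j)
          have k: "k = Suc (Suc j)" using Suc \<open>k = Suc k1\<close> by simp
          have h1: "int (los (Suc m) (Suc (Suc (Suc j)))) = int (los m (Suc (Suc j))) +
   (if even (Suc j) then int (los m (Suc (Suc (Suc j)))) else int (m choose Suc (Suc (Suc j))) - int (los m (Suc (Suc (Suc j)))))"
            using IH[of "Suc (Suc j)"] by simp
          have h2: "int (los (Suc m) (Suc j)) = int (los m j) + (if even (Suc j) then int (los m (Suc j)) else int (m choose Suc j) - int (los m (Suc j)))" using IH[of j] by simp
          have e1: "los (Suc (Suc (Suc m))) (Suc (Suc (Suc j))) = los (Suc m) (Suc (Suc (Suc j))) + (Suc m choose Suc (Suc j)) + los (Suc m) (Suc j)"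
            by simp
          have e2: "los (Suc (Suc m)) (Suc (Suc j)) = los m (Suc (Suc j)) + (m choose Suc j) + los m j" by simp
          have e3: "los (Suc (Suc m)) (Suc (Suc (Suc j))) = los m (Suc (Suc (Suc j))) + (m choose Suc (Suc j)) + los m (Suc j)" by simp
          have b1: "(Suc m choose Suc (Suc j)) = (m choose Suc j) + (m choose Suc (Suc j))" by simp
          have b2: "(Suc (Suc m) choose Suc (Suc (Suc j))) = (m choose Suc (Suc (Suc j))) + 2 * (m choose Suc (Suc j)) + (m choose Suc j)" by simp
          show ?thesis unfolding n k using h1 h2 e1 e2 e3 b1 b2
            by (cases "even j") (simp_all add: of_nat_add)
        qed
      qed
    qed
  qed
qed

lemma P2_eq: "[:-1, 0, 1:] = [:0, 1::int:]^2 - 1"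
  by (simp add: power2_eq_square one_pCons)

lemma Xpow: "[:-1, 0, 1::int:] dvd [:0, 1:]^s - (if even s then 1 else [:0, 1:])"
proof (induction s rule: less_induct)
  case (less s)
  show ?case
  proof (cases s)
    case 0 then show ?thesis by simp
  next
    case (Suc t)
    show ?thesis
    proof (cases t)
      case 0 then show ?thesis using Suc by simp
    next
      case (Suc u)
      have s: "s = Suc (Suc u)" using Suc \<open>s = Suc t\<close> by simp
      have "[:0, 1::int:]^s - (if even s then 1 else [:0, 1:]) =
         ([:0, 1:]^2 - 1) * [:0, 1:]^u + ([:0, 1:]^u - (if even u then 1 else [:0, 1:]))"
        unfolding s by (simp add: algebra_simps power2_eq_square)
      moreover have "[:-1, 0, 1::int:] dvd [:0, 1:]^u - (if even u then 1 else [:0, 1:])"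
        using less s by simp
      ultimately show ?thesis unfolding P2_eq by (simp add: dvd_add)
    qed
  qed
qed

lemma Xpow_even: "even s \<Longrightarrow> [:-1, 0, 1::int:] dvd [:0, 1:]^s - 1"
  using Xpow[of s] by simp
lemma Xpow_odd: "odd s \<Longrightarrow> [:-1, 0, 1::int:] dvd [:0, 1:]^s - [:0, 1:]"
  using Xpow[of s] by simp

definition AA :: "nat \<Rightarrow> nat \<Rightarrow> nat set set" where
  "AA n k = {S. S \<subseteq> {1..n} \<and> card S = k}"
definition EE :: "nat \<Rightarrow> nat \<Rightarrow> int poly" where
  "EE n k = (\<Sum>S\<in>AA n k. [:0, 1:]^(\<Sum>S))"

lemma finite_AA: "finite (AA n k)"
  unfolding AA_def by (rule finite_subset[of _ "Pow {1..n}"]) auto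

lemma eps_EE: "[:-1, 0, 1::int:] dvd EE n k - eps n k"
proof -
  define E where "E = {S. S \<subseteq> {1..n} \<and> card S = k \<and> even (\<Sum>S)}"
  define Od where "Od = {S. S \<subseteq> {1..n} \<and> card S = k \<and> odd (\<Sum>S)}"
  have AA: "AA n k = E \<union> Od" unfolding AA_def E_def Od_def by auto
  have fE: "finite E" and fO: "finite Od" using finite_AA[of n k] AA by auto
  have dj: "E \<inter> Od = {}" unfolding E_def Od_def by auto
  have "EE n k - eps n k = (\<Sum>S\<in>E. [:0, 1:]^(\<Sum>S) - 1) + (\<Sum>S\<in>Od. [:0, 1:]^(\<Sum>S) - [:0, 1:])"
    unfolding EE_def eps_def AA e_cnt_def o_cnt_def E_def[symmetric] Od_def[symmetric]
    by (simp add: sum.union_disjoint[OF fE fO dj] sum_subtractf algebra_simps)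
  moreover have "[:-1, 0, 1::int:] dvd (\<Sum>S\<in>E. [:0, 1:]^(\<Sum>S) - 1)"
    by (rule dvd_sum) (auto simp: E_def intro: Xpow_even)
  moreover have "[:-1, 0, 1::int:] dvd (\<Sum>S\<in>Od. [:0, 1:]^(\<Sum>S) - [:0, 1:])"
    by (rule dvd_sum) (auto simp: Od_def intro: Xpow_odd)
  ultimately show ?thesis by (simp add: dvd_add)
qed

lemma AA_Suc: "AA (Suc m) (Suc k) = (\<lambda>T. Suc ` T) ` AA m (Suc k) \<union> (\<lambda>T. insert 1 (Suc ` T)) ` AA m k"
proof
  show "AA (Suc m) (Suc k) \<subseteq> (\<lambda>T. Suc ` T) ` AA m (Suc k) \<union> (\<lambda>T. insert 1 (Suc ` T)) ` AA m k"
  proof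
    fix S assume S: "S \<in> AA (Suc m) (Suc k)"
    hence sub: "S \<subseteq> {1..Suc m}" and cS: "card S = Suc k" by (auto simp: AA_def)
    have fS: "finite S" using sub finite_subset by blast
    define T where "T = Suc -` (S - {1})"
    have ST: "S - {1} = Suc ` T" proof
    show "S - {1} \<subseteq> Suc ` T"
    proof
      fix x assume x: "x \<in> S - {1}"
      hence "x \<ge> 2" using sub by fastforce
      hence "x = Suc (x - 1)" by simp
      moreover have "Suc (x - 1) \<in> S - {1}" using x \<open>x = Suc (x - 1)\<close> by simp
      hence "x - 1 \<in> T" unfolding T_def by blast
      ultimately show "x \<in> Suc ` T" by blast
    qed
  qed (auto simp: T_def)
    have Tsub: "T \<subseteq> {1..m}" unfolding T_def using sub by auto
    have cT: "card T = card (S - {1})" unfolding ST by (simp add: card_image)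
    show "S \<in> (\<lambda>T. Suc ` T) ` AA m (Suc k) \<union> (\<lambda>T. insert 1 (Suc ` T)) ` AA m k"
    proof (cases "1 \<in> S")
      case True
      have "S = insert 1 (Suc ` T)" using ST True by auto
      moreover have "T \<in> AA m k" using Tsub cT True cS fS by (auto simp: AA_def)
      ultimately show ?thesis by blast
    next
      case False
      have "S = Suc ` T" using ST False by auto
      moreover have "T \<in> AA m (Suc k)" using Tsub cT False cS by (auto simp: AA_def)
      ultimately show ?thesis by blast
    qed
  qed
next
  show "(\<lambda>T. Suc ` T) ` AA m (Suc k) \<union> (\<lambda>T. insert 1 (Suc ` T)) ` AA m k \<subseteq> AA (Suc m) (Suc k)"
  proof
    fix S assume "S \<in> (\<lambda>T. Suc ` T) ` AA m (Suc k) \<union> (\<lambda>T. insert 1 (Suc ` T)) ` AA m k"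
    then show "S \<in> AA (Suc m) (Suc k)"
    proof
      assume "S \<in> (\<lambda>T. Suc ` T) ` AA m (Suc k)"
      then obtain T where T: "T \<in> AA m (Suc k)" "S = Suc ` T" by auto
      then show ?thesis by (auto simp: AA_def card_image)
    next
      assume "S \<in> (\<lambda>T. insert 1 (Suc ` T)) ` AA m k"
      then obtain T where T: "T \<in> AA m k" "S = insert 1 (Suc ` T)" by auto
      have fT: "finite T" using T by (auto simp: AA_def intro: finite_subset)
      have "1 \<notin> Suc ` T" using T by (auto simp: AA_def)
      then show ?thesis using T fT by (auto simp: AA_def card_image)
    qed
  qed
qed


lemma sum_Suc_img: "finite T \<Longrightarrow> \<Sum>(Suc ` T) = \<Sum>T + card T"
  using sum_Suc[of "\<lambda>x. x" T] by (simp add: sum.reindex)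

lemma EE_Suc: "EE (Suc m) (Suc k) = [:0, 1:]^(Suc k) * (EE m (Suc k) + EE m k)"
proof -
  let ?f = "\<lambda>T. Suc ` T" and ?g = "\<lambda>T. insert 1 (Suc ` T)"
  let ?X = "[:0, 1::int:]"
  have fin: "\<And>j T. T \<in> AA m j \<Longrightarrow> finite T" by (auto simp: AA_def intro: finite_subset)
  have n1: "\<And>T. 1 \<notin> Suc ` T \<longleftrightarrow> 0 \<notin> T" by auto
  have z: "\<And>j T. T \<in> AA m j \<Longrightarrow> 0 \<notin> T" by (auto simp: AA_def)
  have injf: "inj_on ?f (AA m (Suc k))" by (simp add: inj_on_def inj_image_eq_iff)
  have injg: "inj_on ?g (AA m k)"
  proof (rule inj_onI)
    fix A B assume A: "A \<in> AA m k" and B: "B \<in> AA m k" and eq: "?g A = ?g B"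
    have "1 \<notin> Suc ` A" "1 \<notin> Suc ` B" using z[OF A] z[OF B] by auto
    hence "Suc ` A = Suc ` B" using eq by (metis insert_ident)
    thus "A = B" by (simp add: inj_image_eq_iff)
  qed
  have dj: "?f ` AA m (Suc k) \<inter> ?g ` AA m k = {}"
  proof (rule ccontr)
    assume "?f ` AA m (Suc k) \<inter> ?g ` AA m k \<noteq> {}"
    then obtain A B where A: "A \<in> AA m (Suc k)" and "Suc ` A = insert 1 (Suc ` B)" by auto
    hence "1 \<in> Suc ` A" by auto
    thus False using z[OF A] by auto
  qed
  have s1: "(\<Sum>S\<in>?f ` AA m (Suc k). ?X^(\<Sum>S)) = ?X^(Suc k) * EE m (Suc k)"
    unfolding EE_def sum.reindex[OF injf] o_def sum_distrib_left
  proof (rule sum.cong)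
    fix T assume T: "T \<in> AA m (Suc k)"
    have "\<Sum>(Suc ` T) = \<Sum>T + Suc k" using fin[OF T] T by (simp add: sum_Suc_img AA_def)
    thus "(?X^(\<Sum>(?f T))) = ?X^(Suc k) * ?X^(\<Sum>T)" by (simp add: power_add)
  qed simp
  have s2: "(\<Sum>S\<in>?g ` AA m k. ?X^(\<Sum>S)) = ?X^(Suc k) * EE m k"
    unfolding EE_def sum.reindex[OF injg] o_def sum_distrib_left
  proof (rule sum.cong)
    fix T assume T: "T \<in> AA m k"
    have "1 \<notin> Suc ` T" using z[OF T] by auto
    hence "\<Sum>(insert 1 (Suc ` T)) = 1 + \<Sum>T + k" using fin[OF T] T by (simp add: sum_Suc_img AA_def)
    thus "(?X^(\<Sum>(?g T))) = ?X^(Suc k) * ?X^(\<Sum>T)" by (simp add: power_add)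
  qed simp
  have "EE (Suc m) (Suc k) = (\<Sum>S\<in>?f ` AA m (Suc k). ?X^(\<Sum>S)) + (\<Sum>S\<in>?g ` AA m k. ?X^(\<Sum>S))"
    unfolding EE_def AA_Suc by (rule sum.union_disjoint) (use finite_AA dj in auto)
  then show ?thesis using s1 s2 by (simp add: distrib_left)
qed


lemma lam_alt: "lam n k = of_int (int (los n k)) + [:0, 1:] * of_int (int (n choose k) - int (los n k))"
  unfolding lam_def los_bar_def by simp

lemma lam_rec: "[:-1, 0, 1:] dvd (lam (Suc m) (Suc j) - ([:0, 1:] ^ Suc j * lam m (Suc j) + lam m j))"
proof -
  let ?X = "[:0, 1::int:]"
  define a where "a = int (los m j)"
  define b where "b = int (los m (Suc j))"
  define c where "c = int (m choose j)"
  define d where "d = int (m choose Suc j)"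
  have C: "int (Suc m choose Suc j) = c + d" unfolding c_def d_def by simp
  have l1: "lam m j = of_int a + ?X * of_int (c - a)" unfolding lam_alt a_def c_def ..
  have l2: "lam m (Suc j) = of_int b + ?X * of_int (d - b)" unfolding lam_alt b_def d_def ..
  show ?thesis
  proof (cases "even (Suc j)")
    case True
    have L: "int (los (Suc m) (Suc j)) = a + b" using los_Q[of m j] True unfolding a_def b_def by simp
    have "lam (Suc m) (Suc j) - (?X ^ Suc j * lam m (Suc j) + lam m j) = - ((?X ^ Suc j - 1) * lam m (Suc j))"
      unfolding lam_alt[of "Suc m"] L C l1 l2 by (simp add: algebra_simps)
    moreover have "[:-1, 0, 1:] dvd (?X ^ Suc j - 1) * lam m (Suc j)"
      using Xpow_even[OF True] by (rule dvd_mult2)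
    ultimately show ?thesis by (metis dvd_minus_iff)
  next
    case False
    have L: "int (los (Suc m) (Suc j)) = a + d - b" using los_Q[of m j] False unfolding a_def b_def d_def by simp
    have "lam (Suc m) (Suc j) - (?X ^ Suc j * lam m (Suc j) + lam m j) = 
        (1 - ?X^2) * of_int (d - b) - (?X ^ Suc j - ?X) * lam m (Suc j)"
      unfolding lam_alt[of "Suc m"] L C l1 l2 by (simp add: algebra_simps power2_eq_square)
    moreover have "[:-1, 0, 1:] dvd (1 - ?X^2) * of_int (d - b)"
      unfolding P2_eq by (metis dvd_minus_iff dvd_mult2 dvd_refl minus_diff_eq)
    moreover have "[:-1, 0, 1:] dvd (?X ^ Suc j - ?X) * lam m (Suc j)"
      using Xpow_odd[OF False] by (rule dvd_mult2)
    ultimately show ?thesis by (metis dvd_diff)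
  qed
qed

lemma eps_rec: "[:-1, 0, 1:] dvd (eps (Suc m) (Suc j) - [:0, 1:] ^ Suc j * (eps m (Suc j) + eps m j))"
proof -
  have eq: "eps (Suc m) (Suc j) - [:0, 1:] ^ Suc j * (eps m (Suc j) + eps m j) =
     - (EE (Suc m) (Suc j) - eps (Suc m) (Suc j)) + [:0, 1:] ^ Suc j * ((EE m (Suc j) - eps m (Suc j)) + (EE m j - eps m j))"
    by (simp add: EE_Suc algebra_simps)
  show ?thesis unfolding eq
    by (intro dvd_add dvd_mult eps_EE iffD2[OF dvd_minus_iff])
qed

lemma c0: "S \<subseteq> {1..(n::nat)} \<Longrightarrow> card S = 0 \<Longrightarrow> S = {}"
  by (metis card_0_eq finite_atLeastAtMost finite_subset)

lemma e0: "e_cnt n 0 = 1"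
proof -
  have "{S. S \<subseteq> {1..n} \<and> card S = 0 \<and> even (\<Sum>S)} = {{}}"
    using c0[of _ n] by auto
  thus ?thesis unfolding e_cnt_def by simp
qed
lemma o0: "o_cnt n 0 = 0"
proof -
  have "{S. S \<subseteq> {1..n} \<and> card S = 0 \<and> odd (\<Sum>S)} = {}"
  proof (rule ccontr)
    assume "{S. S \<subseteq> {1..n} \<and> card S = 0 \<and> odd (\<Sum>S)} \<noteq> {}"
    then obtain S where "S \<subseteq> {1..n}" "card S = 0" "odd (\<Sum>S)" by blast
    thus False using c0[of S n] by simp
  qed
  thus ?thesis unfolding o_cnt_def by simp
qed

theorem proposition4p3:
  shows "(\<forall>n. eps n 0 = 1 \<and> lam n 0 = 1)
    \<and> (\<forall>k>0. eps 0 k = 0 \<and> lam 0 k = 0)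
    \<and> (\<forall>n\<ge>1. \<forall>k\<ge>1.
          [:-1, 0, 1:] dvd (eps n k - [:0, 1:] ^ k * (eps (n - 1) k + eps (n - 1) (k - 1)))
        \<and> [:-1, 0, 1:] dvd (lam n k - ([:0, 1:] ^ k * lam (n - 1) k + lam (n - 1) (k - 1))))"
proof (intro conjI allI impI)
  fix n show "eps n 0 = 1" unfolding eps_def by (simp add: e0 o0)
  show "lam n 0 = 1" unfolding lam_def los_bar_def by (simp add: los_0)
next
  fix k :: nat assume k: "k > 0"
  have "{S. S \<subseteq> {1..0::nat} \<and> card S = k \<and> even (\<Sum>S)} = {}"
    "{S. S \<subseteq> {1..0::nat} \<and> card S = k \<and> odd (\<Sum>S)} = {}" using k by auto
  thus "eps 0 k = 0" unfolding eps_def e_cnt_def o_cnt_def by (simp only: card.empty) simp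
  show "lam 0 k = 0" unfolding lam_def los_bar_def using k by simp
next
  fix n k :: nat assume "n \<ge> 1" "k \<ge> 1"
  then obtain m j where n: "n = Suc m" and k: "k = Suc j" by (metis Suc_le_D One_nat_def)
  show "[:-1, 0, 1:] dvd (eps n k - [:0, 1:] ^ k * (eps (n - 1) k + eps (n - 1) (k - 1)))"
    unfolding n k using eps_rec by simp
  show "[:-1, 0, 1:] dvd (lam n k - ([:0, 1:] ^ k * lam (n - 1) k + lam (n - 1) (k - 1)))"
    unfolding n k using lam_rec by simp
qed

end
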